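(* In the setting of the addition algorithm, for every $\varphi\in\mathbb{R}^V$: $\tau(v)=\tau_1(v,\cdot)\ge\tau_2(v,\cdot)\ge\cdots\ge\tau_{|V|}(v,\cdot)\ge0$ pointwise for every $v\in V$; $s_k\in[0,\tau(P_k)]$ for $1\le k\le|V|$; and $s_1\le s_2\le\cdots\le s_{|V|}$. In particular $0\le T^+(\varphi)_v-\varphi_v=\varphi_v-T^-(\varphi)_v\le\tau(v)$ for all $v$.
   Context: Addition algorithm. Let $G=(V,E)$ be a finite connected graph ($v\sim w$ means $(v,w)\in E$), $\tau:V\to[0,\infty)$, $0<\varepsilon\le1/2$, and fix a total order $\preceq$ on $V$. Let $f:\mathbb{R}\to\mathbb{R}$ be $f(x)=0$ for $|x|\ge1$, $f(x)=(1+x)/\varepsilon$ on $[-1,-1+\varepsilon]$, $f(x)=1$ on $[-1+\varepsilon,1-\varepsilon]$, $f(x)=(1-x)/\varepsilon$ on $[1-\varepsilon,1]$. For $v\in V$, $h,t\in\mathbb{R}$ let $m_{v,h,t}(h')=\min(\tau(v)-t,\varepsilon/2)f(h'-h)+t$ if $\tau(v)\ge t$, and $m_{v,h,t}(h')=t$ if $\tau(v)<t$. On input $\varphi\in\mathbb{R}^V$ the algorithm outputs an ordering $P_1,\dots,P_{|V|}$ of $V$, numbers $s_k$ and functions $\tau_k:V\times\mathbb{R}\to\mathbb{R}$: set $\tau_1(v,h)=\tau(v)$; for $k=1,\dots,|V|$: let $P_k$ be the vertex $v\in V\setminus\{P_1,\dots,P_{k-1}\}$ minimizing $\tau_k(v,\varphi_v)$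 (ties broken by taking the $\preceq$-smallest); set $s_k=\tau_k(P_k,\varphi_{P_k})$; if $k<|V|$ set $\tau_{k+1}(v,h)=\tau_k(v,h)$ if $v\in\{P_1,\dots,P_k\}$ or $v\not\sim P_k$, and $\tau_{k+1}(v,h)=\min(\tau_k(v,h),m_{v,\varphi_{P_k},s_k}(h))$ otherwise. Define $T^+(\varphi)_{P_k}=\varphi_{P_k}+s_k$ ($1\le k\le|V|$) and $T^-(\varphi)=2\varphi-T^+(\varphi)$. *)

theory Defs
  imports Main Complex_Main
begin

definition f_eps :: "real \<Rightarrow> real \<Rightarrow> real" where
  "f_eps eps x =
     (if \<bar>x\<bar> \<ge> 1 then 0
      else if x \<le> -1 + eps then (1 + x) / eps
      else if x \<le> 1 - eps then 1
      else (1 - x) / eps)"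

definition m_fun :: "('a \<Rightarrow> real) \<Rightarrow> real \<Rightarrow> 'a \<Rightarrow> real \<Rightarrow> real \<Rightarrow> real \<Rightarrow> real" where
  "m_fun tau eps v h t h' =
     (if tau v \<ge> t then min (tau v - t) (eps / 2) * f_eps eps (h' - h) + t else t)"

definition select_vertex :: "'a set \<Rightarrow> ('a \<Rightarrow> 'a \<Rightarrow> bool) \<Rightarrow> ('a \<Rightarrow> real)
                     \<Rightarrow> 'a list \<Rightarrow> ('a \<Rightarrow> real \<Rightarrow> real) \<Rightarrow> 'a" where
  "select_vertex V le phi Ps t =
     (THE v. v \<in> V - set Ps \<and>
        (\<forall>w \<in> V - set Ps. t v (phi v) < t w (phi w) \<or>
                          (t v (phi v) = t w (phi w) \<and> le v w)))"

text \<open>alg_state k = ([P_1,...,P_k], tau_{k+1}).\<close>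
fun alg_state :: "'a set \<Rightarrow> ('a \<times> 'a) set \<Rightarrow> ('a \<Rightarrow> 'a \<Rightarrow> bool) \<Rightarrow> ('a \<Rightarrow> real) \<Rightarrow> real
                  \<Rightarrow> ('a \<Rightarrow> real) \<Rightarrow> nat \<Rightarrow> 'a list \<times> ('a \<Rightarrow> real \<Rightarrow> real)" where
  "alg_state V E le tau eps phi 0 = ([], (\<lambda>v h. tau v))"
| "alg_state V E le tau eps phi (Suc k) =
     (let (Ps, t) = alg_state V E le tau eps phi k;
          p = select_vertex V le phi Ps t;
          s = t p (phi p);
          Ps' = Ps @ [p]
      in (Ps', (\<lambda>v h. if v \<in> set Ps' \<or> (v, p) \<notin> E then t v h
                       else min (t v h) (m_fun tau eps v (phi p) s h))))"

definition tauk :: "'a set \<Rightarrow> ('a \<times> 'a) set \<Rightarrow> ('a \<Rightarrow> 'a \<Rightarrow> bool) \<Rightarrow> ('a \<Rightarrow> real) \<Rightarrow> real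
                  \<Rightarrow> ('a \<Rightarrow> real) \<Rightarrow> nat \<Rightarrow> 'a \<Rightarrow> real \<Rightarrow> real" where
  "tauk V E le tau eps phi k = snd (alg_state V E le tau eps phi (k - 1))"

definition Pk :: "'a set \<Rightarrow> ('a \<times> 'a) set \<Rightarrow> ('a \<Rightarrow> 'a \<Rightarrow> bool) \<Rightarrow> ('a \<Rightarrow> real) \<Rightarrow> real
                  \<Rightarrow> ('a \<Rightarrow> real) \<Rightarrow> nat \<Rightarrow> 'a" where
  "Pk V E le tau eps phi k =
     select_vertex V le phi (fst (alg_state V E le tau eps phi (k - 1)))
                     (snd (alg_state V E le tau eps phi (k - 1)))"

definition sk :: "'a set \<Rightarrow> ('a \<times> 'a) set \<Rightarrow> ('a \<Rightarrow> 'a \<Rightarrow> bool) \<Rightarrow> ('a \<Rightarrow> real) \<Rightarrow> real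
                  \<Rightarrow> ('a \<Rightarrow> real) \<Rightarrow> nat \<Rightarrow> real" where
  "sk V E le tau eps phi k =
     tauk V E le tau eps phi k (Pk V E le tau eps phi k) (phi (Pk V E le tau eps phi k))"

definition Tplus :: "'a set \<Rightarrow> ('a \<times> 'a) set \<Rightarrow> ('a \<Rightarrow> 'a \<Rightarrow> bool) \<Rightarrow> ('a \<Rightarrow> real) \<Rightarrow> real
                  \<Rightarrow> ('a \<Rightarrow> real) \<Rightarrow> 'a \<Rightarrow> real" where
  "Tplus V E le tau eps phi v =
     phi v + sk V E le tau eps phi
               (THE k. k \<in> {1..card V} \<and> Pk V E le tau eps phi k = v)"

definition Tminus :: "'a set \<Rightarrow> ('a \<times> 'a) set \<Rightarrow> ('a \<Rightarrow> 'a \<Rightarrow> bool) \<Rightarrow> ('a \<Rightarrow> real) \<Rightarrow> real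
                  \<Rightarrow> ('a \<Rightarrow> real) \<Rightarrow> 'a \<Rightarrow> real" where
  "Tminus V E le tau eps phi v = 2 * phi v - Tplus V E le tau eps phi v"

end

theory Submission
  imports Defs
begin

lemma f_eps_nonneg: "0 < eps \<Longrightarrow> 0 \<le> f_eps eps x"
  unfolding f_eps_def by (auto simp: abs_if)

lemma m_fun_ge: "0 < eps \<Longrightarrow> t \<le> m_fun tau eps v h t h'"
  unfolding m_fun_def using f_eps_nonneg[of eps "h' - h"] by auto

context
  fixes V :: "'a set" and E :: "('a \<times> 'a) set" and le :: "'a \<Rightarrow> 'a \<Rightarrow> bool"
    and tau :: "'a \<Rightarrow> real" and eps :: real and phi :: "'a \<Rightarrow> real"
  assumes finV: "finite V"
    and le_refl: "\<forall>v \<in> V. le v v"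
    and le_antisym: "\<forall>v \<in> V. \<forall>w \<in> V. le v w \<and> le w v \<longrightarrow> v = w"
    and le_trans: "\<forall>u \<in> V. \<forall>v \<in> V. \<forall>w \<in> V. le u v \<and> le v w \<longrightarrow> le u w"
    and le_total: "\<forall>v \<in> V. \<forall>w \<in> V. le v w \<or> le w v"
    and tau_nonneg: "\<forall>v \<in> V. tau v \<ge> 0"
    and eps_pos: "0 < eps"
begin

lemma exists_min:
  fixes g :: "'a \<Rightarrow> real"
  assumes "finite S" "S \<noteq> {}" "S \<subseteq> V"
  shows "\<exists>x\<in>S. \<forall>w\<in>S. g x < g w \<or> (g x = g w \<and> le x w)"
  using assms
proof (induction S rule: finite_ne_induct)
  case (singleton x)
  then show ?case using le_refl by auto
next
  case (insert a F)
  then obtain x where x: "x \<in> F" "\<forall>w\<in>F. g x < g w \<or> (g x = g w \<and> le x w)" by auto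
  show ?case
  proof (cases "g a < g x \<or> (g a = g x \<and> le a x)")
    case True
    have "\<forall>w\<in>insert a F. g a < g w \<or> (g a = g w \<and> le a w)"
    proof
      fix w assume w: "w \<in> insert a F"
      show "g a < g w \<or> (g a = g w \<and> le a w)"
      proof (cases "w = a")
        case True then show ?thesis using le_refl insert by auto
      next
        case False
        then have "w \<in> F" using w by auto
        have V3: "a \<in> V" "x \<in> V" "w \<in> V" using insert.prems \<open>x \<in> F\<close> \<open>w \<in> F\<close> by auto
        have tr: "le a x \<and> le x w \<longrightarrow> le a w" using le_trans V3 by blast
        have xw: "g x < g w \<or> (g x = g w \<and> le x w)" using x \<open>w \<in> F\<close> by blast
        show ?thesis using True xw tr by auto
      qed
    qed
    then show ?thesis by auto
  next
    case False
    then have "g x < g a \<or> (g x = g a \<and> le x a)"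
      using le_total insert.prems x(1) by auto
    then show ?thesis using x by auto
  qed
qed

lemma select_props:
  assumes "V - set Ps \<noteq> {}"
  shows "select_vertex V le phi Ps t \<in> V - set Ps
       \<and> (\<forall>w\<in>V - set Ps. t (select_vertex V le phi Ps t) (phi (select_vertex V le phi Ps t)) \<le> t w (phi w))"
proof -
  let ?S = "V - set Ps"
  let ?g = "\<lambda>w. t w (phi w)"
  let ?P = "\<lambda>v. v \<in> ?S \<and> (\<forall>w \<in> ?S. ?g v < ?g w \<or> (?g v = ?g w \<and> le v w))"
  have "\<exists>x\<in>?S. \<forall>w\<in>?S. ?g x < ?g w \<or> (?g x = ?g w \<and> le x w)"
    by (rule exists_min) (use finV assms in auto)
  then obtain x where x1: "x \<in> ?S" and x2: "\<forall>w\<in>?S. ?g x < ?g w \<or> (?g x = ?g w \<and> le x w)"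
    by blast
  have uniq: "y = x" if y1: "y \<in> ?S" and y2: "\<forall>w\<in>?S. ?g y < ?g w \<or> (?g y = ?g w \<and> le y w)" for y
  proof -
    have a: "?g x < ?g y \<or> (?g x = ?g y \<and> le x y)" using x2 y1 by blast
    have b: "?g y < ?g x \<or> (?g y = ?g x \<and> le y x)" using y2 x1 by blast
    have "le x y" "le y x" using a b by auto
    moreover have "x \<in> V" "y \<in> V" using x1 y1 by auto
    ultimately show ?thesis using le_antisym by blast
  qed
  have eq: "select_vertex V le phi Ps t = x"
    unfolding select_vertex_def
  proof (rule the_equality)
    show "?P x" using x1 x2 by blast
    fix y assume "?P y" then show "y = x" using uniq by blast
  qed
  have "\<forall>w\<in>?S. ?g x \<le> ?g w"
  proof
    fix w assume "w \<in> ?S"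
    then have "?g x < ?g w \<or> (?g x = ?g w \<and> le x w)" using x2 by blast
    then show "?g x \<le> ?g w" by auto
  qed
  then show ?thesis unfolding eq using x1 by blast
qed

abbreviation "A \<equiv> alg_state V E le tau eps phi"

lemma A_Suc_fst: "fst (A (Suc k)) = fst (A k) @ [select_vertex V le phi (fst (A k)) (snd (A k))]"
  by (cases "A k") (simp add: Let_def)

lemma A_Suc_snd: "snd (A (Suc k)) v h =
   (if v \<in> set (fst (A (Suc k))) \<or> (v, select_vertex V le phi (fst (A k)) (snd (A k))) \<notin> E
    then snd (A k) v h
    else min (snd (A k) v h) (m_fun tau eps v (phi (select_vertex V le phi (fst (A k)) (snd (A k))))
          (snd (A k) (select_vertex V le phi (fst (A k)) (snd (A k)))
                (phi (select_vertex V le phi (fst (A k)) (snd (A k))))) h))"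
  by (cases "A k") (simp add: Let_def)

declare alg_state.simps(2)[simp del]

lemma A_mono: "snd (A (Suc k)) v h \<le> snd (A k) v h"
  by (simp add: A_Suc_snd)

lemma A_le_tau: "snd (A k) v h \<le> tau v"
proof (induction k)
  case 0 then show ?case by simp
next
  case (Suc k) then show ?case using A_mono[of k v h] by linarith
qed

lemma A_fst_map: "fst (A k) = map (Pk V E le tau eps phi) [1..<k+1]"
proof (induction k)
  case 0 then show ?case by simp
next
  case (Suc k)
  then show ?case by (simp add: A_Suc_fst Pk_def)
qed

lemma inv:
  "k \<le> card V \<Longrightarrow> distinct (fst (A k)) \<and> set (fst (A k)) \<subseteq> V \<and> length (fst (A k)) = k
     \<and> (\<forall>v\<in>V. \<forall>h. 0 \<le> snd (A k) v h)"
proof (induction k)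
  case 0 then show ?case using tau_nonneg by simp
next
  case (Suc k)
  let ?Ps = "fst (A k)" and ?t = "snd (A k)"
  let ?p = "select_vertex V le phi ?Ps ?t"
  have IH: "distinct ?Ps" "set ?Ps \<subseteq> V" "length ?Ps = k" "\<forall>v\<in>V. \<forall>h. 0 \<le> ?t v h"
    using Suc by auto
  have "card (set ?Ps) = k" using IH distinct_card by metis
  then have "V - set ?Ps \<noteq> {}"
  proof (intro notI)
    assume "V - set ?Ps = {}"
    then have "V \<subseteq> set ?Ps" by blast
    then have "card V \<le> k" using card_mono[OF finite_set] \<open>card (set ?Ps) = k\<close> by metis
    then show False using Suc.prems by simp
  qed
  from select_props[OF this] have p: "?p \<in> V - set ?Ps" by blast
  have s: "0 \<le> ?t ?p (phi ?p)" using IH p by auto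
  have nn: "\<forall>v\<in>V. \<forall>h. 0 \<le> snd (A (Suc k)) v h"
  proof (intro ballI allI)
    fix v h assume v: "v \<in> V"
    have "0 \<le> m_fun tau eps v (phi ?p) (?t ?p (phi ?p)) h"
      using m_fun_ge[OF eps_pos, of "?t ?p (phi ?p)" tau v "phi ?p" h] s by linarith
    then show "0 \<le> snd (A (Suc k)) v h" using IH v by (simp add: A_Suc_snd)
  qed
  show ?case using IH p nn by (simp add: A_Suc_fst)
qed

end

declare alg_state.simps(2)[simp del]

theorem lemma2p1:
  fixes V :: "'a set" and E :: "('a \<times> 'a) set" and le :: "'a \<Rightarrow> 'a \<Rightarrow> bool"
    and tau :: "'a \<Rightarrow> real" and eps :: real and phi :: "'a \<Rightarrow> real"
  assumes finV: "finite V" and neV: "V \<noteq> {}"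
    and E_sub: "E \<subseteq> V \<times> V" and E_sym: "sym E" and E_irr: "irrefl E"
    and conn: "\<forall>v \<in> V. \<forall>w \<in> V. (v, w) \<in> E\<^sup>*"
    and le_refl: "\<forall>v \<in> V. le v v"
    and le_antisym: "\<forall>v \<in> V. \<forall>w \<in> V. le v w \<and> le w v \<longrightarrow> v = w"
    and le_trans: "\<forall>u \<in> V. \<forall>v \<in> V. \<forall>w \<in> V. le u v \<and> le v w \<longrightarrow> le u w"
    and le_total: "\<forall>v \<in> V. \<forall>w \<in> V. le v w \<or> le w v"
    and tau_nonneg: "\<forall>v \<in> V. tau v \<ge> 0"
    and eps_pos: "0 < eps" and eps_le: "eps \<le> 1/2"
  shows "(\<forall>v \<in> V. \<forall>h. tauk V E le tau eps phi 1 v h = tau v)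
       \<and> (\<forall>v \<in> V. \<forall>k \<in> {1..<card V}. \<forall>h.
            tauk V E le tau eps phi (k + 1) v h \<le> tauk V E le tau eps phi k v h)
       \<and> (\<forall>v \<in> V. \<forall>k \<in> {1..card V}. \<forall>h. tauk V E le tau eps phi k v h \<ge> 0)
       \<and> (\<forall>k \<in> {1..card V}. 0 \<le> sk V E le tau eps phi k
            \<and> sk V E le tau eps phi k \<le> tau (Pk V E le tau eps phi k))
       \<and> (\<forall>k \<in> {1..<card V}. sk V E le tau eps phi k \<le> sk V E le tau eps phi (k + 1))
       \<and> (\<forall>v \<in> V. 0 \<le> Tplus V E le tau eps phi v - phi v
            \<and> Tplus V E le tau eps phi v - phi v = phi v - Tminus V E le tau eps phi v
            \<and> phi v - Tminus V E le tau eps phi v \<le> tau v)"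
proof -
  note ctx = finV le_refl le_antisym le_trans le_total tau_nonneg eps_pos
  note INV = inv[OF ctx, where E=E and phi=phi]
  note SEL = select_props[OF finV le_refl le_antisym le_trans le_total tau_nonneg eps_pos]
  let ?A = "alg_state V E le tau eps phi"
  let ?P = "Pk V E le tau eps phi"
  let ?s = "sk V E le tau eps phi"
  let ?sel = "\<lambda>j. select_vertex V le phi (fst (?A j)) (snd (?A j))"
  have tS: "tauk V E le tau eps phi (Suc j) = snd (?A j)" for j by (simp add: tauk_def)
  have PS: "?P (Suc j) = ?sel j" for j by (simp add: Pk_def)
  have sS: "?s (Suc j) = snd (?A j) (?sel j) (phi (?sel j))" for j
    by (simp add: sk_def tS PS)
  have selV: "?sel j \<in> V - set (fst (?A j))" if "j < card V" for j
  proof -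
    have I: "distinct (fst (?A j))" "set (fst (?A j)) \<subseteq> V" "length (fst (?A j)) = j"
      using INV[where k=j] that by auto
    have "card (set (fst (?A j))) = j" using I distinct_card by metis
    then have "V - set (fst (?A j)) \<noteq> {}"
    proof (intro notI)
      assume "V - set (fst (?A j)) = {}"
      then have "V \<subseteq> set (fst (?A j))" by blast
      then have "card V \<le> j" using card_mono[OF finite_set] \<open>card (set (fst (?A j))) = j\<close> by metis
      then show False using that by simp
    qed
    then show ?thesis using SEL by blast
  qed
  have selmin: "snd (?A j) (?sel j) (phi (?sel j)) \<le> snd (?A j) w (phi w)"
    if "j < card V" "w \<in> V - set (fst (?A j))" for j w
  proof -
    have I: "distinct (fst (?A j))" "set (fst (?A j)) \<subseteq> V" "length (fst (?A j)) = j"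
      using INV[where k=j] that by auto
    have "card (set (fst (?A j))) = j" using I distinct_card by metis
    then have "V - set (fst (?A j)) \<noteq> {}"
    proof (intro notI)
      assume "V - set (fst (?A j)) = {}"
      then have "V \<subseteq> set (fst (?A j))" by blast
      then have "card V \<le> j" using card_mono[OF finite_set] \<open>card (set (fst (?A j))) = j\<close> by metis
      then show False using that by simp
    qed
    then show ?thesis using SEL that(2) by blast
  qed
  have p1: "\<forall>v \<in> V. \<forall>h. tauk V E le tau eps phi 1 v h = tau v" by (simp add: tauk_def)
  have p2: "\<forall>v \<in> V. \<forall>k \<in> {1..<card V}. \<forall>h.
            tauk V E le tau eps phi (k + 1) v h \<le> tauk V E le tau eps phi k v h"
  proof (intro ballI allI)
    fix v k h assume "k \<in> {1..<card V}"
    then obtain j where k: "k = Suc j" by (cases k) auto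
    show "tauk V E le tau eps phi (k + 1) v h \<le> tauk V E le tau eps phi k v h"
      unfolding k using A_mono[OF ctx] by (simp add: tS)
  qed
  have p3: "\<forall>v \<in> V. \<forall>k \<in> {1..card V}. \<forall>h. tauk V E le tau eps phi k v h \<ge> 0"
  proof (intro ballI allI)
    fix v k h assume v: "v \<in> V" and "k \<in> {1..card V}"
    then obtain j where k: "k = Suc j" "j < card V" by (cases k) auto
    show "tauk V E le tau eps phi k v h \<ge> 0" unfolding k tS using INV[where k=j] k v by auto
  qed
  have p4: "\<forall>k \<in> {1..card V}. 0 \<le> ?s k \<and> ?s k \<le> tau (?P k)"
  proof
    fix k assume "k \<in> {1..card V}"
    then obtain j where k: "k = Suc j" "j < card V" by (cases k) auto
    have "?sel j \<in> V" using selV k by blast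
    then show "0 \<le> ?s k \<and> ?s k \<le> tau (?P k)" unfolding k sS PS
      using INV[where k=j] k A_le_tau[OF ctx] by auto
  qed
  have p5: "\<forall>k \<in> {1..<card V}. ?s k \<le> ?s (k + 1)"
  proof
    fix k assume "k \<in> {1..<card V}"
    then obtain j where k: "k = Suc j" "Suc j < card V" by (cases k) auto
    let ?p = "?sel j" and ?q = "?sel (Suc j)"
    have qV: "?q \<in> V - set (fst (?A (Suc j)))" using selV k by blast
    then have q: "?q \<in> V - set (fst (?A j))" "?q \<noteq> ?p"
      by (auto simp: A_Suc_fst[OF ctx] simp del: alg_state.simps)
    have m: "snd (?A j) ?p (phi ?p) \<le> snd (?A j) ?q (phi ?q)"
      using selmin[of j ?q] k q by auto
    have "snd (?A j) ?p (phi ?p) \<le> snd (?A (Suc j)) ?q (phi ?q)"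
      using m m_fun_ge[OF eps_pos, of "snd (?A j) ?p (phi ?p)" tau ?q "phi ?p" "phi ?q"]
      by (simp add: A_Suc_snd[OF ctx, where k=j and v="?q" and E=E and phi=phi] del: alg_state.simps)
    then show "?s k \<le> ?s (k + 1)" unfolding k using sS[of j] sS[of "Suc j"] by simp
  qed
  have p6: "\<forall>v \<in> V. 0 \<le> Tplus V E le tau eps phi v - phi v
            \<and> Tplus V E le tau eps phi v - phi v = phi v - Tminus V E le tau eps phi v
            \<and> phi v - Tminus V E le tau eps phi v \<le> tau v"
  proof
    fix v assume v: "v \<in> V"
    have I: "distinct (fst (?A (card V)))" "set (fst (?A (card V))) \<subseteq> V"
      "length (fst (?A (card V))) = card V"
      using INV[where k="card V"] by auto
    have fm: "fst (?A (card V)) = map ?P [1..<card V + 1]" using A_fst_map[OF ctx] .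
    have "card (set (fst (?A (card V)))) = card V" using I distinct_card by metis
    then have "set (fst (?A (card V))) = V" using I(2) finV card_subset_eq by blast
    have ss: "set [1..<card V + 1] = {1..card V}" by auto
    have img: "?P ` {1..card V} = V" using fm ss \<open>set (fst (?A (card V))) = V\<close> by (metis list.set_map)
    have inj: "inj_on ?P {1..card V}" using I(1) fm ss by (metis distinct_map)
    have "v \<in> ?P ` {1..card V}" using img v by simp
    then obtain k0 where k0: "k0 \<in> {1..card V}" "?P k0 = v" by blast
    have "(THE k. k \<in> {1..card V} \<and> ?P k = v) = k0"
    proof (rule the_equality)
      show "k0 \<in> {1..card V} \<and> ?P k0 = v" using k0 by simp
      fix k assume "k \<in> {1..card V} \<and> ?P k = v"
      then show "k = k0" using k0 inj by (metis inj_onD)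
    qed
    then have T: "Tplus V E le tau eps phi v - phi v = ?s k0" by (simp add: Tplus_def)
    have B: "0 \<le> ?s k0 \<and> ?s k0 \<le> tau (?P k0)" using p4 k0(1) by blast
    then show "0 \<le> Tplus V E le tau eps phi v - phi v
            \<and> Tplus V E le tau eps phi v - phi v = phi v - Tminus V E le tau eps phi v
            \<and> phi v - Tminus V E le tau eps phi v \<le> tau v"
      using T B k0(2) by (simp add: Tminus_def)
  qed
  show ?thesis by (rule conjI[OF p1 conjI[OF p2 conjI[OF p3 conjI[OF p4 conjI[OF p5 p6]]]]])
qed

end
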